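(* Let $\mu,\nu$ be compactly supported Borel probability measures on $\mathbb{R}^n$ and $(q,t)\in\mathbb{R}^2$ such that $B_{\mu,\nu}$ is differentiable at $(q,t)$; set $\alpha=-\frac{\partial B_{\mu,\nu}(q,t)}{\partial q}$ and $\beta=-\frac{\partial B_{\mu,\nu}(q,t)}{\partial t}$. Then for all $\eta_1,\eta_2>0$, $$\mathcal H^{\alpha q+\beta t+B_{\mu,\nu}(q,t)-\eta_1-\eta_2}\big(E_{\mu,\nu}(\alpha,\beta)\big)\ge 2^{\alpha q+\beta t-\eta_1-\eta_2}\,\mathcal H^{q,t,B_{\mu,\nu}(q,t)}_{\mu,\nu}\big(E_{\mu,\nu}(\alpha,\beta)\big).$$
   Context: $\mathcal H^s$ denotes the $s$-dimensional Hausdorff measure. $B(x,r)$ denotes the closed ball of center $x$ and radius $r$; conventions $0^q=\infty$ for $q\le0$, $0^q=0$ for $q>0$. Centered $\delta$-packings (resp. coverings) of $E$ are countable families of pairwise disjoint closed balls (resp. closed balls covering $E$) $B(x_i,r_i)$ with $x_i\in E$, $0<r_i\le\delta$. For $q,t,s\in\mathbb{R}$: $\overline{\mathcal P}^{q,t,s}_{\mu,\nu,\delta}(E)=\sup\sum_i\mu(B(x_i,r_i))^q\nu(B(x_i,r_i))^t(2r_i)^s$ over centered $\delta$-packings, $\overline{\mathcal P}^{q,t,s}_{\mu,\nu}=\inf_{\delta>0}\overline{\mathcal P}^{q,t,s}_{\mu,\nu,\delta}$, $\mathcal P^{q,t,s}_{\mu,\nu}(E)=\inf\{\sum_i\overline{\mathcal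 P}^{q,t,s}_{\mu,\nu}(E_i):E\subseteq\bigcup_iE_i\}$; $\overline{\mathcal H}^{q,t,s}_{\mu,\nu,\delta}(E)$ is the same sum with infimum over centered $\delta$-coverings, $\overline{\mathcal H}^{q,t,s}_{\mu,\nu}=\sup_{\delta>0}\overline{\mathcal H}^{q,t,s}_{\mu,\nu,\delta}$, $\mathcal H^{q,t,s}_{\mu,\nu}(E)=\sup_{F\subseteq E}\overline{\mathcal H}^{q,t,s}_{\mu,\nu}(F)$. $B^{q,t}_{\mu,\nu}(E)$ is the unique value in $[-\infty,\infty]$ where $s\mapsto\mathcal P^{q,t,s}_{\mu,\nu}(E)$ jumps from $\infty$ (smaller $s$) to $0$ (larger $s$), and $B_{\mu,\nu}(q,t)=B^{q,t}_{\mu,\nu}(\operatorname{supp}\mu\cap\operatorname{supp}\nu)$. $E_{\mu,\nu}(\alpha,\beta)=\{x\in\operatorname{supp}\mu\cap\operatorname{supp}\nu:\lim_{r\to0}\frac{\log\mu(B(x,r))}{\log r}=\alpha,\ \lim_{r\to0}\frac{\log\nu(B(x,r))}{\log r}=\beta\}$. *)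

theory Defs
  imports "HOL-Probability.Probability"
begin

definition msupp :: "'a::euclidean_space measure \<Rightarrow> 'a set" where
  "msupp \<mu> = {x. \<forall>r>0. 0 < emeasure \<mu> (ball x r)}"

definition Eset :: "'a::euclidean_space measure \<Rightarrow> 'a measure \<Rightarrow> real \<Rightarrow> real \<Rightarrow> 'a set" where
  "Eset \<mu> \<nu> \<alpha> \<beta> = {x \<in> msupp \<mu> \<inter> msupp \<nu>.
      ((\<lambda>r. ln (measure \<mu> (cball x r)) / ln r) \<longlongrightarrow> \<alpha>) (at_right 0) \<and>
      ((\<lambda>r. ln (measure \<nu> (cball x r)) / ln r) \<longlongrightarrow> \<beta>) (at_right 0)}"

definition hpow :: "real \<Rightarrow> real \<Rightarrow> ennreal" where
  "hpow d s = (if d = 0 then (if s = 0 then 1 else if s > 0 then 0 else \<infinity>) else ennreal (d powr s))"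

definition hausdorff_delta :: "real \<Rightarrow> real \<Rightarrow> 'a::euclidean_space set \<Rightarrow> ennreal" where
  "hausdorff_delta s \<delta> E = (INF U \<in> {U :: nat \<Rightarrow> 'a set. E \<subseteq> (\<Union>i. U i) \<and>
        (\<forall>i. bounded (U i) \<and> diameter (U i) \<le> \<delta>)}.
        (\<Sum>i. if U i = {} then 0 else hpow (diameter (U i)) s))"

definition hausdorff_measure :: "real \<Rightarrow> 'a::euclidean_space set \<Rightarrow> ennreal" where
  "hausdorff_measure s E = (SUP \<delta> \<in> {0<..}. hausdorff_delta s \<delta> E)"

definition mpow :: "real \<Rightarrow> real \<Rightarrow> ennreal" where
  "mpow a q = (if a = 0 then (if q \<le> 0 then \<infinity> else 0) else ennreal (a powr q))"

definition ball_term :: "'a::euclidean_space measure \<Rightarrow> 'a measure \<Rightarrow> real \<Rightarrow> real \<Rightarrow> real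
    \<Rightarrow> 'a \<times> real \<Rightarrow> ennreal" where
  "ball_term \<mu> \<nu> q t s p = mpow (measure \<mu> (cball (fst p) (snd p))) q
      * mpow (measure \<nu> (cball (fst p) (snd p))) t * ennreal ((2 * snd p) powr s)"

text \<open>Centered \<delta>-packings / coverings, as countable sets of (center, radius) pairs.\<close>
definition centered_packing :: "'a::euclidean_space set \<Rightarrow> real \<Rightarrow> ('a \<times> real) set \<Rightarrow> bool" where
  "centered_packing E \<delta> P \<longleftrightarrow> countable P \<and>
     (\<forall>p\<in>P. fst p \<in> E \<and> 0 < snd p \<and> snd p \<le> \<delta>) \<and>
     (\<forall>p\<in>P. \<forall>p'\<in>P. p \<noteq> p' \<longrightarrow> cball (fst p) (snd p) \<inter> cball (fst p') (snd p') = {})"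

definition centered_covering :: "'a::euclidean_space set \<Rightarrow> real \<Rightarrow> ('a \<times> real) set \<Rightarrow> bool" where
  "centered_covering E \<delta> C \<longleftrightarrow> countable C \<and>
     (\<forall>p\<in>C. fst p \<in> E \<and> 0 < snd p \<and> snd p \<le> \<delta>) \<and>
     E \<subseteq> (\<Union>p\<in>C. cball (fst p) (snd p))"

definition Pbar_delta :: "'a::euclidean_space measure \<Rightarrow> 'a measure \<Rightarrow> real \<Rightarrow> real \<Rightarrow> real
    \<Rightarrow> real \<Rightarrow> 'a set \<Rightarrow> ennreal" where
  "Pbar_delta \<mu> \<nu> q t s \<delta> E =
     (SUP P \<in> {P. centered_packing E \<delta> P}. infsum (ball_term \<mu> \<nu> q t s) P)"

definition Pbar :: "'a::euclidean_space measure \<Rightarrow> 'a measure \<Rightarrow> real \<Rightarrow> real \<Rightarrow> real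
    \<Rightarrow> 'a set \<Rightarrow> ennreal" where
  "Pbar \<mu> \<nu> q t s E = (INF \<delta> \<in> {0<..}. Pbar_delta \<mu> \<nu> q t s \<delta> E)"

definition Pmeas :: "'a::euclidean_space measure \<Rightarrow> 'a measure \<Rightarrow> real \<Rightarrow> real \<Rightarrow> real
    \<Rightarrow> 'a set \<Rightarrow> ennreal" where
  "Pmeas \<mu> \<nu> q t s E =
     (INF Es \<in> {Es :: nat \<Rightarrow> 'a set. E \<subseteq> (\<Union>i. Es i)}. (\<Sum>i. Pbar \<mu> \<nu> q t s (Es i)))"

definition Hbar_delta :: "'a::euclidean_space measure \<Rightarrow> 'a measure \<Rightarrow> real \<Rightarrow> real \<Rightarrow> real
    \<Rightarrow> real \<Rightarrow> 'a set \<Rightarrow> ennreal" where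
  "Hbar_delta \<mu> \<nu> q t s \<delta> E =
     (INF C \<in> {C. centered_covering E \<delta> C}. infsum (ball_term \<mu> \<nu> q t s) C)"

definition Hbar :: "'a::euclidean_space measure \<Rightarrow> 'a measure \<Rightarrow> real \<Rightarrow> real \<Rightarrow> real
    \<Rightarrow> 'a set \<Rightarrow> ennreal" where
  "Hbar \<mu> \<nu> q t s E = (SUP \<delta> \<in> {0<..}. Hbar_delta \<mu> \<nu> q t s \<delta> E)"

definition Hmeas :: "'a::euclidean_space measure \<Rightarrow> 'a measure \<Rightarrow> real \<Rightarrow> real \<Rightarrow> real
    \<Rightarrow> 'a set \<Rightarrow> ennreal" where
  "Hmeas \<mu> \<nu> q t s E = (SUP F \<in> Pow E. Hbar \<mu> \<nu> q t s F)"

text \<open>The critical exponent where s \<mapsto> Pmeas ... s E jumps from \<infinity> to 0.\<close>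
definition Bdim :: "'a::euclidean_space measure \<Rightarrow> 'a measure \<Rightarrow> real \<Rightarrow> real \<Rightarrow> 'a set \<Rightarrow> ereal" where
  "Bdim \<mu> \<nu> q t E = Inf {ereal s | s. Pmeas \<mu> \<nu> q t s E = 0}"

definition Bfun :: "'a::euclidean_space measure \<Rightarrow> 'a measure \<Rightarrow> real \<times> real \<Rightarrow> ereal" where
  "Bfun \<mu> \<nu> qt = Bdim \<mu> \<nu> (fst qt) (snd qt) (msupp \<mu> \<inter> msupp \<nu>)"

end

theory Submission
  imports Defs
begin


lemma infsum_img_le:
  fixes g :: "'b \<Rightarrow> ennreal" and h :: "nat \<Rightarrow> 'b"
  shows "infsum g (h ` I) \<le> (\<Sum>i. if i \<in> I then g (h i) else 0)"
proof -
  have "infsum g (h ` I) = (SUP F\<in>{F. finite F \<and> F\<subseteq>h ` I}. sum g F)"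
    by (rule nonneg_infsum_complete) simp
  also have "\<dots> \<le> (\<Sum>i. if i \<in> I then g (h i) else 0)"
  proof (rule SUP_least)
    fix F assume "F \<in> {F. finite F \<and> F\<subseteq>h ` I}"
    then obtain J where J: "J \<subseteq> I" "finite J" "F = h ` J"
      using finite_subset_image by (metis (no_types, lifting) mem_Collect_eq)
    have "sum g F \<le> sum (g \<circ> h) J" using J sum_image_le[of J g h] by simp
    also have "\<dots> = sum (\<lambda>i. if i \<in> I then g (h i) else 0) J"
      using J by (intro sum.cong) auto
    also have "\<dots> \<le> (\<Sum>i. if i \<in> I then g (h i) else 0)"
      by (rule sum_le_suminf) (auto simp: J)
    finally show "sum g F \<le> (\<Sum>i. if i \<in> I then g (h i) else 0)" .
  qed
  finally show ?thesis .
qed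

lemma infsum_UN_le:
  fixes g :: "'b \<Rightarrow> ennreal" and C :: "nat \<Rightarrow> 'b set"
  shows "infsum g (\<Union>k. C k) \<le> (\<Sum>k. infsum g (C k))"
proof -
  have "infsum g (\<Union>k. C k) = (SUP F\<in>{F. finite F \<and> F\<subseteq>(\<Union>k. C k)}. sum g F)"
    by (rule nonneg_infsum_complete) simp
  also have "\<dots> \<le> (\<Sum>k. infsum g (C k))"
  proof (rule SUP_least)
    fix F assume "F \<in> {F. finite F \<and> F\<subseteq>(\<Union>k. C k)}"
    hence F: "finite F" "F \<subseteq> (\<Union>k. C k)" by auto
    define kx where "kx x = (SOME k. x \<in> C k)" for x
    have kx: "x \<in> C (kx x)" if "x \<in> F" for x
      using F that unfolding kx_def by (metis UN_E someI_ex subsetD)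
    have "sum g F = sum (\<lambda>k. sum g {x\<in>F. kx x = k}) (kx ` F)"
      by (rule sum.image_gen) (rule F)
    also have "\<dots> \<le> sum (\<lambda>k. infsum g (C k)) (kx ` F)"
    proof (rule sum_mono)
      fix k assume "k \<in> kx ` F"
      have "infsum g (C k) = (SUP F\<in>{F. finite F \<and> F\<subseteq>C k}. sum g F)"
        by (rule nonneg_infsum_complete) simp
      moreover have "{x\<in>F. kx x = k} \<in> {F. finite F \<and> F\<subseteq>C k}"
        using F kx by auto
      ultimately show "sum g {x\<in>F. kx x = k} \<le> infsum g (C k)"
        by (simp add: SUP_upper)
    qed
    also have "\<dots> \<le> (\<Sum>k. infsum g (C k))"
      by (rule sum_le_suminf) (auto simp: F)
    finally show "sum g F \<le> (\<Sum>k. infsum g (C k))" .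
  qed
  finally show ?thesis .
qed



lemma pos_meas:
  assumes "prob_space \<mu>" "x \<in> msupp \<mu>" "r > 0" "sets \<mu> = sets borel"
  shows "0 < measure \<mu> (cball x r)" "measure \<mu> (cball x r) \<le> 1"
proof -
  interpret prob_space \<mu> by fact
  have "0 < emeasure \<mu> (ball x r)" using assms unfolding msupp_def by auto
  also have "\<dots> \<le> emeasure \<mu> (cball x r)"
    using assms(4) by (intro emeasure_mono) auto
  finally show "0 < measure \<mu> (cball x r)" using emeasure_eq_measure by simp
  show "measure \<mu> (cball x r) \<le> 1" by simp
qed

lemma pointwise_bound:
  assumes mu: "prob_space \<mu>" and nu: "prob_space \<nu>"
    and smu: "sets \<mu> = sets borel" and snu: "sets \<nu> = sets borel"
    and x: "x \<in> Eset \<mu> \<nu> \<alpha> \<beta>" and eta: "\<eta> > 0"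
  shows "\<exists>r0>0. \<forall>r. 0 < r \<and> r < r0 \<longrightarrow>
     ball_term \<mu> \<nu> q t B (x, r) \<le> ennreal (2 powr B * r powr (\<alpha>*q + \<beta>*t + B - \<eta>))"
proof -
  define e where "e = \<eta> / (\<bar>q\<bar> + \<bar>t\<bar> + 1)"
  have e: "e > 0" using eta by (simp add: e_def add_pos_nonneg)
  have qte: "(\<bar>q\<bar> + \<bar>t\<bar>) * e < \<eta>"
  proof -
    have "(\<bar>q\<bar> + \<bar>t\<bar>) * e < (\<bar>q\<bar> + \<bar>t\<bar> + 1) * e" using e by simp
    also have "\<dots> = \<eta>" unfolding e_def by (simp add: add_pos_nonneg)
    finally show ?thesis .
  qed
  from x have xs: "x \<in> msupp \<mu>" "x \<in> msupp \<nu>"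
    and l1: "((\<lambda>r. ln (measure \<mu> (cball x r)) / ln r) \<longlongrightarrow> \<alpha>) (at_right 0)"
    and l2: "((\<lambda>r. ln (measure \<nu> (cball x r)) / ln r) \<longlongrightarrow> \<beta>) (at_right 0)"
    unfolding Eset_def by auto
  have "eventually (\<lambda>r. dist (ln (measure \<mu> (cball x r)) / ln r) \<alpha> < e) (at_right 0)"
    using l1 e by (simp add: tendsto_iff)
  moreover have "eventually (\<lambda>r. dist (ln (measure \<nu> (cball x r)) / ln r) \<beta> < e) (at_right 0)"
    using l2 e by (simp add: tendsto_iff)
  moreover have "eventually (\<lambda>r. r < (1::real)) (at_right 0)"
    by (simp add: eventually_at_right_field) (auto intro: exI[of _ 1])
  ultimately have "eventually (\<lambda>r. dist (ln (measure \<mu> (cball x r)) / ln r) \<alpha> < e \<and>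
       dist (ln (measure \<nu> (cball x r)) / ln r) \<beta> < e \<and> r < 1) (at_right 0)"
    by eventually_elim auto
  then obtain b where b: "b > 0" and bP: "\<And>r. r > 0 \<Longrightarrow> r < b \<Longrightarrow>
      dist (ln (measure \<mu> (cball x r)) / ln r) \<alpha> < e \<and>
       dist (ln (measure \<nu> (cball x r)) / ln r) \<beta> < e \<and> r < 1"
    unfolding eventually_at_right_field by auto
  show ?thesis
  proof (intro exI[of _ b] conjI allI impI)
    show "b > 0" by fact
    fix r assume r: "0 < r \<and> r < b"
    define m where "m = measure \<mu> (cball x r)"
    define n where "n = measure \<nu> (cball x r)"
    have m: "m > 0" using pos_meas[OF mu xs(1) _ smu] r by (auto simp: m_def)
    have n: "n > 0" using pos_meas[OF nu xs(2) _ snu] r by (auto simp: n_def)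
    have rr: "\<bar>ln m / ln r - \<alpha>\<bar> < e" "\<bar>ln n / ln r - \<beta>\<bar> < e" "r < 1"
      using bP[of r] r by (auto simp: m_def n_def dist_real_def)
    define L where "L = ln r"
    have L: "L < 0" using rr r by (simp add: L_def)
    define a where "a = ln m / L"
    define c where "c = ln n / L"
    have lm: "ln m = a * L" and ln: "ln n = c * L" using L by (auto simp: a_def c_def)
    have ha: "\<bar>a - \<alpha>\<bar> < e" "\<bar>c - \<beta>\<bar> < e" using rr by (auto simp: a_def c_def L_def)
    have "\<bar>q * (a - \<alpha>)\<bar> \<le> \<bar>q\<bar> * e" unfolding abs_mult using ha
      by (intro mult_left_mono) auto
    moreover have "\<bar>t * (c - \<beta>)\<bar> \<le> \<bar>t\<bar> * e" unfolding abs_mult using ha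
      by (intro mult_left_mono) auto
    ultimately have "q * a + t * c \<ge> \<alpha>*q + \<beta>*t - \<eta>" using qte
      by (simp add: algebra_simps abs_le_iff)
    hence key: "q * ln m + t * ln n \<le> (\<alpha>*q + \<beta>*t - \<eta>) * L"
      unfolding lm ln using L
      by (smt (verit) mult.assoc distrib_right mult_right_mono_neg)
    have "ball_term \<mu> \<nu> q t B (x, r) = ennreal (m powr q) * ennreal (n powr t) * ennreal ((2*r) powr B)"
      unfolding ball_term_def mpow_def using m n by (simp add: m_def n_def)
    also have "\<dots> = ennreal (m powr q * n powr t * (2*r) powr B)"
      by (simp add: ennreal_mult)
    also have "\<dots> \<le> ennreal (2 powr B * r powr (\<alpha>*q + \<beta>*t + B - \<eta>))"
    proof (rule ennreal_leI)
      have "m powr q * n powr t = exp (q * ln m + t * ln n)"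
        using m n by (simp add: powr_def exp_add mult.commute)
      also have "\<dots> \<le> exp ((\<alpha>*q + \<beta>*t - \<eta>) * L)" using key by simp
      also have "\<dots> = r powr (\<alpha>*q + \<beta>*t - \<eta>)" using r by (simp add: powr_def L_def)
      finally have 1: "m powr q * n powr t \<le> r powr (\<alpha>*q + \<beta>*t - \<eta>)" .
      have 2: "(2*r) powr B = 2 powr B * r powr B" using r by (simp add: powr_mult)
      have 3: "r powr (\<alpha>*q + \<beta>*t + B - \<eta>) = r powr (\<alpha>*q + \<beta>*t - \<eta>) * r powr B"
      proof -
        have "\<alpha>*q + \<beta>*t + B - \<eta> = (\<alpha>*q + \<beta>*t - \<eta>) + B" by simp
        thus ?thesis by (simp only: powr_add)
      qed
      show "m powr q * n powr t * (2*r) powr B \<le> 2 powr B * r powr (\<alpha>*q + \<beta>*t + B - \<eta>)"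
        unfolding 2 3 using mult_left_mono[OF mult_right_mono[OF 1, of "r powr B"], of "2 powr B"]
        by (simp add: mult_ac)
    qed
    finally show "ball_term \<mu> \<nu> q t B (x, r) \<le> ennreal (2 powr B * r powr (\<alpha>*q + \<beta>*t + B - \<eta>))" .
  qed
qed



lemma half_pow_powr: "((1/2::real)^i) powr \<eta> = ((1/2) powr \<eta>)^i"
  by (simp add: powr_realpow[symmetric] powr_powr powr_power mult.commute)

lemma Hbar_delta_anti:
  assumes "\<delta>1 \<le> \<delta>2"
  shows "Hbar_delta \<mu> \<nu> q t B \<delta>2 G \<le> Hbar_delta \<mu> \<nu> q t B \<delta>1 G"
  unfolding Hbar_delta_def
  by (rule INF_superset_mono) (use assms in \<open>fastforce simp: centered_covering_def\<close>, simp)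

lemma hbar_delta_bound:
  fixes G :: "'a::euclidean_space set"
  assumes Gsub: "\<And>x r. x \<in> G \<Longrightarrow> 0 < r \<Longrightarrow> r < \<rho> \<Longrightarrow>
        ball_term \<mu> \<nu> q t B (x,r) \<le> ennreal (2 powr B * r powr (s + \<eta>))"
    and HM: "hausdorff_measure s G = ennreal M" and M: "M \<ge> 0"
    and eta: "\<eta> > 0" and d: "0 < \<delta>" "\<delta> < \<rho>" "\<delta> \<le> 1"
  shows "Hbar_delta \<mu> \<nu> q t B \<delta> G \<le>
     ennreal (2 powr B * \<delta> powr \<eta> * (M + 1 + 1 / (1 - (1/2) powr \<eta>)))"
proof -
  define y where "y = (1/2::real) powr \<eta>"
  have y: "0 < y" "y < 1"
  proof -
    show "0 < y" by (simp add: y_def)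
    have "y = exp (\<eta> * ln (1/2))" by (simp add: y_def powr_def)
    moreover have "\<eta> * ln (1/2) < 0" using eta by (simp add: mult_pos_neg)
    ultimately show "y < 1" by simp
  qed
  define c where "c = 2 powr B * \<delta> powr \<eta>"
  have c: "c > 0" using d by (simp add: c_def)
  have "hausdorff_delta s \<delta> G \<le> hausdorff_measure s G"
    unfolding hausdorff_measure_def by (rule SUP_upper) (simp add: d)
  also have "\<dots> < ennreal (M + 1)" using HM M by (simp add: ennreal_lessI)
  finally obtain U where U: "G \<subseteq> (\<Union>i. U i)" "\<And>i. bounded (U i)" "\<And>i. diameter (U i) \<le> \<delta>"
    and Us0: "(\<Sum>i. if U i = {} then 0 else hpow (diameter (U i)) s) < ennreal (M+1)"
    unfolding hausdorff_delta_def INF_less_iff by auto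
  define cost where "cost i = (if U i = {} then 0 else hpow (diameter (U i)) s)" for i
  have Us: "(\<Sum>i. cost i) < ennreal (M+1)" using Us0 by (simp add: cost_def)
  define I where "I = {i. U i \<inter> G \<noteq> {}}"
  define xc where "xc i = (SOME x. x \<in> U i \<inter> G)" for i
  define rc where "rc i = (if diameter (U i) > 0 then diameter (U i) else \<delta> * (1/2)^i)" for i
  define C where "C = (\<lambda>i. (xc i, rc i)) ` I"
  have xc: "xc i \<in> U i" "xc i \<in> G" if "i \<in> I" for i
    using that someI_ex[of "\<lambda>x. x \<in> U i \<inter> G"] unfolding I_def xc_def by auto
  have rc: "0 < rc i" "rc i \<le> \<delta>" for i
  proof -
    have "(1/2::real)^i \<le> 1" by (rule power_le_one) auto
    then show "0 < rc i" "rc i \<le> \<delta>" using d U(3)[of i]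
      by (auto simp: rc_def mult_le_cancel_left1)
  qed
  have cov: "centered_covering G \<delta> C"
    unfolding centered_covering_def
  proof (intro conjI ballI subsetI)
    show "countable C" unfolding C_def by simp
  next
    fix p assume "p \<in> C"
    then obtain i where "i \<in> I" "p = (xc i, rc i)" unfolding C_def by auto
    then show "fst p \<in> G" "0 < snd p" "snd p \<le> \<delta>" using xc rc by auto
  next
    fix g assume "g \<in> G"
    then obtain i where i: "g \<in> U i" using U(1) by auto
    hence iI: "i \<in> I" using \<open>g \<in> G\<close> by (auto simp: I_def)
    have "dist (xc i) g \<le> diameter (U i)"
      by (rule diameter_bounded_bound) (use U(2) xc[OF iI] i in auto)
    moreover have "diameter (U i) \<le> rc i" using rc[of i] by (auto simp: rc_def)
    ultimately have "g \<in> cball (fst (xc i, rc i)) (snd (xc i, rc i))" by simp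
    then show "g \<in> (\<Union>p\<in>C. cball (fst p) (snd p))" using iI unfolding C_def by blast
  qed
  have "Hbar_delta \<mu> \<nu> q t B \<delta> G \<le> infsum (ball_term \<mu> \<nu> q t B) C"
    unfolding Hbar_delta_def by (rule INF_lower) (simp add: cov)
  also have "\<dots> \<le> (\<Sum>i. if i \<in> I then ball_term \<mu> \<nu> q t B (xc i, rc i) else 0)"
    unfolding C_def by (rule infsum_img_le)
  also have "\<dots> \<le> (\<Sum>i. ennreal c * (cost i + ennreal (y^i)))"
  proof (rule suminf_le)
    fix i
    show "(if i \<in> I then ball_term \<mu> \<nu> q t B (xc i, rc i) else 0) \<le> ennreal c * (cost i + ennreal (y^i))"
    proof (cases "i \<in> I")
      case False then show ?thesis by simp
    next
      case True
      have ne: "U i \<noteq> {}" using True by (auto simp: I_def)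
      have d0: "0 \<le> diameter (U i)" using U(2) by (rule diameter_ge_0)
      have bt: "ball_term \<mu> \<nu> q t B (xc i, rc i) \<le> ennreal (2 powr B * rc i powr (s + \<eta>))"
        using Gsub[OF xc(2)[OF True] rc(1)] rc(2)[of i] d by auto
      show ?thesis
      proof (cases "diameter (U i) > 0")
        case pos: True
        define D where "D = diameter (U i)"
        have D: "D > 0" "D \<le> \<delta>" using pos U(3)[of i] by (auto simp: D_def)
        have rcD: "rc i = D" using pos by (simp add: rc_def D_def)
        have costD: "cost i = ennreal (D powr s)" using ne D by (simp add: cost_def hpow_def D_def)
        have "2 powr B * D powr (s + \<eta>) = 2 powr B * D powr \<eta> * D powr s"
          by (simp add: powr_add mult_ac)
        also have "\<dots> \<le> c * D powr s" unfolding c_def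
          using D d eta by (intro mult_right_mono mult_left_mono powr_mono2) auto
        finally have "ball_term \<mu> \<nu> q t B (xc i, rc i) \<le> ennreal (c * D powr s)"
          using bt rcD by (meson ennreal_leI order.trans)
        also have "\<dots> = ennreal c * cost i" using c by (simp add: costD ennreal_mult)
        also have "\<dots> \<le> ennreal c * (cost i + ennreal (y^i))"
          by (intro mult_left_mono) auto
        finally show ?thesis using True by simp
      next
        case npos: False
        hence D0: "diameter (U i) = 0" using d0 by simp
        show ?thesis
        proof (cases "s \<ge> 0")
          case s: True
          have rci: "rc i = \<delta> * (1/2)^i" using npos by (simp add: rc_def)
          have r1: "rc i \<le> 1" using rc(2)[of i] d by simp
          have "rc i powr (s + \<eta>) = rc i powr s * rc i powr \<eta>" by (simp add: powr_add)
          also have "\<dots> \<le> 1 * rc i powr \<eta>"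
            using s r1 rc(1)[of i] by (intro mult_right_mono powr_le1) auto
          also have "rc i powr \<eta> = \<delta> powr \<eta> * y^i"
            using d by (simp add: rci powr_mult half_pow_powr y_def)
          finally have "2 powr B * rc i powr (s + \<eta>) \<le> c * y^i"
            unfolding c_def by (simp add: mult_ac)
          hence "ball_term \<mu> \<nu> q t B (xc i, rc i) \<le> ennreal (c * y^i)"
            using bt by (meson ennreal_leI order.trans)
          also have "\<dots> = ennreal c * ennreal (y^i)" using c y by (simp add: ennreal_mult)
          also have "\<dots> \<le> ennreal c * (cost i + ennreal (y^i))"
            by (intro mult_left_mono) auto
          finally show ?thesis using True by simp
        next
          case s: False
          have "cost i = \<infinity>" using ne D0 s by (simp add: cost_def hpow_def)
          hence "ennreal c * (cost i + ennreal (y^i)) = \<infinity>" using c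
            by (simp add: ennreal_mult_top)
          then show ?thesis by simp
        qed
      qed
    qed
  qed auto
  also have "\<dots> = ennreal c * ((\<Sum>i. cost i) + (\<Sum>i. ennreal (y^i)))"
    by (simp add: suminf_add)
  also have "(\<Sum>i. ennreal (y^i)) = ennreal (1 / (1 - y))"
    using y by (simp add: suminf_ennreal2 summable_geometric suminf_geometric)
  also have "ennreal c * ((\<Sum>i. cost i) + ennreal (1 / (1 - y))) \<le> ennreal c * (ennreal (M+1) + ennreal (1 / (1 - y)))"
    using Us by (intro mult_left_mono add_right_mono) auto
  also have "\<dots> = ennreal (c * (M + 1 + 1 / (1 - y)))"
    using c M y by (simp add: ennreal_mult ennreal_plus[symmetric])
  finally show ?thesis by (simp add: c_def y_def)
qed



lemma hausdorff_mono:
  assumes "A \<subseteq> B"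
  shows "hausdorff_measure s A \<le> hausdorff_measure s B"
  unfolding hausdorff_measure_def
proof (rule SUP_subset_mono)
  fix d :: real
  show "hausdorff_delta s d A \<le> hausdorff_delta s d B"
    unfolding hausdorff_delta_def by (rule INF_superset_mono) (use assms in auto)
qed simp

lemma hbar_zero:
  fixes G :: "'a::euclidean_space set"
  assumes Gsub: "\<And>x r. x \<in> G \<Longrightarrow> 0 < r \<Longrightarrow> r < \<rho> \<Longrightarrow>
        ball_term \<mu> \<nu> q t B (x,r) \<le> ennreal (2 powr B * r powr (s + \<eta>))"
    and fin: "hausdorff_measure s G \<noteq> \<infinity>" and eta: "\<eta> > 0" and rho: "\<rho> > 0"
  shows "Hbar \<mu> \<nu> q t B G = 0"
proof -
  define M where "M = enn2real (hausdorff_measure s G)"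
  have HM: "hausdorff_measure s G = ennreal M" using fin by (simp add: M_def less_top)
  have M: "M \<ge> 0" by (simp add: M_def)
  define K where "K = M + 1 + 1 / (1 - (1/2::real) powr \<eta>)"
  have "(1/2::real) powr \<eta> = exp (\<eta> * ln (1/2))" by (simp add: powr_def)
  moreover have "\<eta> * ln (1/2) < 0" using eta by (simp add: mult_pos_neg)
  ultimately have "(1/2::real) powr \<eta> < 1" by simp
  hence K: "K > 0" using M by (simp add: K_def add_pos_nonneg)
  have "Hbar \<mu> \<nu> q t B G \<le> 0"
  proof (rule ennreal_le_epsilon)
    fix e :: real assume e: "0 < e"
    define a where "a = (e / (2 powr B * K)) powr (1/\<eta>)"
    define \<delta>0 where "\<delta>0 = min (min (\<rho>/2) 1) a"
    have a: "a > 0" using e K by (simp add: a_def)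
    have d0: "\<delta>0 > 0" "\<delta>0 < \<rho>" "\<delta>0 \<le> 1" "\<delta>0 \<le> a" using a rho by (auto simp: \<delta>0_def)
    have aeta: "a powr \<eta> = e / (2 powr B * K)"
      using e K eta by (simp add: a_def powr_powr)
    show "Hbar \<mu> \<nu> q t B G \<le> 0 + ennreal e"
      unfolding Hbar_def
    proof (rule SUP_least)
      fix \<delta> :: real assume "\<delta> \<in> {0<..}"
      define \<delta>1 where "\<delta>1 = min \<delta> \<delta>0"
      have d1: "0 < \<delta>1" "\<delta>1 < \<rho>" "\<delta>1 \<le> 1" "\<delta>1 \<le> \<delta>" "\<delta>1 \<le> a"
        using d0 \<open>\<delta> \<in> {0<..}\<close> by (auto simp: \<delta>1_def)
      have "Hbar_delta \<mu> \<nu> q t B \<delta> G \<le> Hbar_delta \<mu> \<nu> q t B \<delta>1 G"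
        by (rule Hbar_delta_anti) (rule d1)
      also have "\<dots> \<le> ennreal (2 powr B * \<delta>1 powr \<eta> * K)"
        unfolding K_def by (rule hbar_delta_bound[OF Gsub HM M eta d1(1-3)])
      also have "\<dots> \<le> ennreal e"
      proof (rule ennreal_leI)
        have "\<delta>1 powr \<eta> \<le> a powr \<eta>" using d1 eta by (intro powr_mono2) auto
        hence "2 powr B * \<delta>1 powr \<eta> * K \<le> 2 powr B * (a powr \<eta>) * K"
          using K by (intro mult_right_mono mult_left_mono) auto
        also have "\<dots> = e" unfolding aeta using K by simp
        finally show "2 powr B * \<delta>1 powr \<eta> * K \<le> e" .
      qed
      finally show "Hbar_delta \<mu> \<nu> q t B \<delta> G \<le> 0 + ennreal e" by simp
    qed
  qed
  thus ?thesis by simp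
qed



theorem mainTheorem7:
  fixes \<mu> \<nu> :: "'a::euclidean_space measure"
    and q t \<alpha> \<beta> \<eta>\<^sub>1 \<eta>\<^sub>2 :: real
    and D :: "real \<times> real \<Rightarrow> real"
  assumes "sets \<mu> = sets borel" and "prob_space \<mu>" and "compact (msupp \<mu>)"
    and "sets \<nu> = sets borel" and "prob_space \<nu>" and "compact (msupp \<nu>)"
    and "\<forall>\<^sub>F p in nhds (q, t). \<bar>Bfun \<mu> \<nu> p\<bar> \<noteq> \<infinity>"
    and "((\<lambda>p. real_of_ereal (Bfun \<mu> \<nu> p)) has_derivative D) (at (q, t))"
    and "\<alpha> = - D (1, 0)" and "\<beta> = - D (0, 1)"
    and "\<eta>\<^sub>1 > 0" and "\<eta>\<^sub>2 > 0"
  shows "hausdorff_measure (\<alpha> * q + \<beta> * t + real_of_ereal (Bfun \<mu> \<nu> (q, t)) - \<eta>\<^sub>1 - \<eta>\<^sub>2)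
            (Eset \<mu> \<nu> \<alpha> \<beta>)
         \<ge> ennreal (2 powr (\<alpha> * q + \<beta> * t - \<eta>\<^sub>1 - \<eta>\<^sub>2))
            * Hmeas \<mu> \<nu> q t (real_of_ereal (Bfun \<mu> \<nu> (q, t))) (Eset \<mu> \<nu> \<alpha> \<beta>)"
proof -
  define Bv where "Bv = real_of_ereal (Bfun \<mu> \<nu> (q, t))"
  define s where "s = \<alpha> * q + \<beta> * t + Bv - \<eta>\<^sub>1 - \<eta>\<^sub>2"
  define E where "E = Eset \<mu> \<nu> \<alpha> \<beta>"
  have seq: "\<alpha> * q + \<beta> * t + Bv - \<eta>\<^sub>1 = s + \<eta>\<^sub>2" by (simp add: s_def)
  show ?thesis
  proof (cases "hausdorff_measure s E = \<infinity>")
    case True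
    then show ?thesis by (simp add: s_def E_def Bv_def)
  next
    case fin: False
    define Ek where "Ek k = {x\<in>E. \<forall>r. 0 < r \<and> r < inverse (real (Suc k)) \<longrightarrow>
        ball_term \<mu> \<nu> q t Bv (x, r) \<le> ennreal (2 powr Bv * r powr (s + \<eta>\<^sub>2))}" for k
    have Ecov: "E \<subseteq> (\<Union>k. Ek k)"
    proof
      fix x assume x: "x \<in> E"
      obtain r0 where r0: "r0 > 0" and hr: "\<And>r. 0 < r \<and> r < r0 \<Longrightarrow>
          ball_term \<mu> \<nu> q t Bv (x, r) \<le> ennreal (2 powr Bv * r powr (\<alpha>*q + \<beta>*t + Bv - \<eta>\<^sub>1))"
        using pointwise_bound[OF assms(2,5,1,4) x[unfolded E_def] assms(11), of q t Bv] by blast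
      obtain k where k: "inverse (real (Suc k)) < r0" using reals_Archimedean[OF r0] by blast
      have "x \<in> Ek k" unfolding Ek_def using x hr k seq by auto
      then show "x \<in> (\<Union>k. Ek k)" by blast
    qed
    have Hk: "Hbar \<mu> \<nu> q t Bv (F \<inter> Ek k) = 0" if "F \<subseteq> E" for F k
    proof (rule hbar_zero[where \<rho> = "inverse (real (Suc k))" and s = s and \<eta> = \<eta>\<^sub>2])
      show "\<And>x r. x \<in> F \<inter> Ek k \<Longrightarrow> 0 < r \<Longrightarrow> r < inverse (real (Suc k)) \<Longrightarrow>
        ball_term \<mu> \<nu> q t Bv (x,r) \<le> ennreal (2 powr Bv * r powr (s + \<eta>\<^sub>2))"
        unfolding Ek_def by blast
      have "hausdorff_measure s (F \<inter> Ek k) \<le> hausdorff_measure s E"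
        using that by (intro hausdorff_mono) auto
      then show "hausdorff_measure s (F \<inter> Ek k) \<noteq> \<infinity>" using fin
        by (metis top.extremum_uniqueI infinity_ennreal_def)
    qed (use assms(12) in auto)
    have HF: "Hbar \<mu> \<nu> q t Bv F = 0" if F: "F \<subseteq> E" for F
    proof -
      have "Hbar \<mu> \<nu> q t Bv F \<le> 0"
        unfolding Hbar_def
      proof (rule SUP_least)
        fix \<delta> :: real assume d: "\<delta> \<in> {0<..}"
        show "Hbar_delta \<mu> \<nu> q t Bv \<delta> F \<le> 0"
        proof (rule ennreal_le_epsilon)
          fix e :: real assume e: "0 < e"
          have "\<exists>C. centered_covering (F \<inter> Ek k) \<delta> C \<and>
                 infsum (ball_term \<mu> \<nu> q t Bv) C < ennreal (e * (1/2)^Suc k)" for k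
          proof -
            have "Hbar_delta \<mu> \<nu> q t Bv \<delta> (F \<inter> Ek k) \<le> Hbar \<mu> \<nu> q t Bv (F \<inter> Ek k)"
              unfolding Hbar_def by (rule SUP_upper) (rule d)
            also have "\<dots> = 0" by (rule Hk[OF F])
            also have "\<dots> < ennreal (e * (1/2)^Suc k)" using e by simp
            finally show ?thesis unfolding Hbar_delta_def INF_less_iff by auto
          qed
          then obtain C where C: "\<And>k. centered_covering (F \<inter> Ek k) \<delta> (C k)"
            "\<And>k. infsum (ball_term \<mu> \<nu> q t Bv) (C k) < ennreal (e * (1/2)^Suc k)"
            by metis
          have cov: "centered_covering F \<delta> (\<Union>k. C k)"
            unfolding centered_covering_def
          proof (intro conjI ballI)
            show "countable (\<Union>k. C k)" using C(1) by (auto simp: centered_covering_def)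
          next
            fix p assume "p \<in> (\<Union>k. C k)"
            then obtain k where "p \<in> C k" by auto
            then show "fst p \<in> F" "0 < snd p" "snd p \<le> \<delta>"
              using C(1)[of k] by (auto simp: centered_covering_def)
          next
            show "F \<subseteq> (\<Union>p\<in>(\<Union>k. C k). cball (fst p) (snd p))"
            proof
              fix x assume "x \<in> F"
              then obtain k where "x \<in> F \<inter> Ek k" using Ecov F by blast
              then obtain p where "p \<in> C k" "x \<in> cball (fst p) (snd p)"
                using C(1)[of k] by (auto simp: centered_covering_def)
              then show "x \<in> (\<Union>p\<in>(\<Union>k. C k). cball (fst p) (snd p))" by blast
            qed
          qed
          have "Hbar_delta \<mu> \<nu> q t Bv \<delta> F \<le> infsum (ball_term \<mu> \<nu> q t Bv) (\<Union>k. C k)"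
            unfolding Hbar_delta_def by (rule INF_lower) (simp add: cov)
          also have "\<dots> \<le> (\<Sum>k. infsum (ball_term \<mu> \<nu> q t Bv) (C k))"
            by (rule infsum_UN_le)
          also have "\<dots> \<le> (\<Sum>k. ennreal (e * (1/2)^Suc k))"
            by (rule suminf_le) (use C(2) less_imp_le in auto)
          also have "\<dots> = ennreal (\<Sum>k. e * (1/2)^Suc k)"
            using e power_half_series by (intro suminf_ennreal2) (auto intro: summable_mult sums_summable)
          also have "(\<Sum>k. e * (1/2::real)^Suc k) = e"
            using sums_mult[OF power_half_series, of e] by (simp add: sums_iff)
          finally show "Hbar_delta \<mu> \<nu> q t Bv \<delta> F \<le> 0 + ennreal e" by simp
        qed
      qed
      thus ?thesis by simp
    qed
    have "Hmeas \<mu> \<nu> q t Bv E \<le> 0"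
      unfolding Hmeas_def by (rule SUP_least) (simp add: HF)
    hence "Hmeas \<mu> \<nu> q t Bv E = 0" by simp
    then show ?thesis by (simp add: s_def E_def Bv_def)
  qed
qed

end
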